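(* Let $n\ge 6$ and let $G$ be a graph on $2n$ vertices with at least $n^2-1$ edges that contains no two distinct vertices of the same degree joined by a path of length three. Let $\beta$ be the largest integer such that $G$ contains two distinct vertices of degree $\beta$, and let $\Delta$ be the maximum degree of $G$. Then either $\beta\ge\Delta-1$ or $\Delta\le n+2$.
   Context: A path of length three joining vertices $a$ and $b$ is a path $a\,x\,y\,b$ with four distinct vertices and three edges. Graphs are finite and simple. *)

theory Defs
  imports Main
begin

definition simple_graph :: "'a set \<Rightarrow> ('a \<Rightarrow> 'a \<Rightarrow> bool) \<Rightarrow> bool" where
  "simple_graph V E \<longleftrightarrow> finite V \<and>
     (\<forall>u v. E u v \<longrightarrow> u \<in> V \<and> v \<in> V \<and> u \<noteq> v \<and> E v u)"

definition num_edges :: "'a set \<Rightarrow> ('a \<Rightarrow> 'a \<Rightarrow> bool) \<Rightarrow> nat" where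
  "num_edges V E = card {{u, v} | u v. u \<in> V \<and> v \<in> V \<and> E u v}"

definition degree :: "'a set \<Rightarrow> ('a \<Rightarrow> 'a \<Rightarrow> bool) \<Rightarrow> 'a \<Rightarrow> nat" where
  "degree V E u = card {v \<in> V. E u v}"

definition max_degree :: "'a set \<Rightarrow> ('a \<Rightarrow> 'a \<Rightarrow> bool) \<Rightarrow> nat" where
  "max_degree V E = Max (degree V E ` V)"

definition beta :: "'a set \<Rightarrow> ('a \<Rightarrow> 'a \<Rightarrow> bool) \<Rightarrow> nat" where
  "beta V E = Max {d. \<exists>u\<in>V. \<exists>v\<in>V. u \<noteq> v \<and> degree V E u = d \<and> degree V E v = d}"

definition path3 :: "('a \<Rightarrow> 'a \<Rightarrow> bool) \<Rightarrow> 'a \<Rightarrow> 'a \<Rightarrow> bool" where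
  "path3 E a b \<longleftrightarrow> (\<exists>x y. distinct [a, x, y, b] \<and> E a x \<and> E x y \<and> E y b)"

end

theory Submission
  imports Defs
begin

lemma handshake:
  assumes g: "simple_graph V E"
  shows "(\<Sum>x\<in>V. degree V E x) = 2 * num_edges V E"
proof -
  have fin: "finite V" using g by (simp add: simple_graph_def)
  have sym: "\<And>u v. E u v \<Longrightarrow> u \<in> V \<and> v \<in> V \<and> u \<noteq> v \<and> E v u" using g by (simp add: simple_graph_def)
  define P where "P = (SIGMA x:V. {y\<in>V. E x y})"
  define Ed where "Ed = {{u, v} | u v. u \<in> V \<and> v \<in> V \<and> E u v}"
  define F where "F = (\<lambda>e::'a set. {(x,y). x \<in> e \<and> y \<in> e \<and> x \<noteq> y})"
  have s1: "(\<Sum>x\<in>V. degree V E x) = card P"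
    unfolding P_def degree_def using fin by simp
  have finEd: "finite Ed"
  proof -
    have "Ed \<subseteq> Pow V" unfolding Ed_def by auto
    then show ?thesis using fin by (meson finite_Pow_iff finite_subset)
  qed
  have PU: "P = \<Union>(F ` Ed)"
  proof
    show "P \<subseteq> \<Union>(F ` Ed)"
    proof
      fix p assume "p \<in> P"
      then obtain x y where p: "p = (x,y)" "x \<in> V" "y \<in> V" "E x y" unfolding P_def by auto
      then have "{x,y} \<in> Ed" unfolding Ed_def by auto
      moreover have "p \<in> F {x,y}" using p sym unfolding F_def by auto
      ultimately show "p \<in> \<Union>(F ` Ed)" by auto
    qed
  next
    show "\<Union>(F ` Ed) \<subseteq> P"
    proof
      fix p assume "p \<in> \<Union>(F ` Ed)"
      then obtain e where e: "e \<in> Ed" "p \<in> F e" by auto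
      then obtain a b where ab: "e = {a,b}" "a \<in> V" "b \<in> V" "E a b" unfolding Ed_def by auto
      obtain x y where p: "p = (x,y)" by (cases p)
      have "x \<in> {a,b}" "y \<in> {a,b}" "x \<noteq> y" using e(2) ab(1) p unfolding F_def by auto
      then have "(x = a \<and> y = b) \<or> (x = b \<and> y = a)" by auto
      then show "p \<in> P" using ab sym p unfolding P_def by auto
    qed
  qed
  have c2: "card (F e) = 2" if eE: "e \<in> Ed" for e
  proof -
    obtain a b where ab: "e = {a,b}" "a \<in> V" "b \<in> V" "E a b" using eE unfolding Ed_def by blast
    have "a \<noteq> b" using sym ab by blast
    have "F e = {(a,b),(b,a)}" using ab(1) \<open>a \<noteq> b\<close> unfolding F_def by auto
    then show ?thesis using \<open>a \<noteq> b\<close> by auto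
  qed
  have finF: "\<forall>e\<in>Ed. finite (F e)"
  proof
    fix e assume "e \<in> Ed"
    then have "card (F e) = 2" by (rule c2)
    then show "finite (F e)" by (metis card.infinite zero_neq_numeral)
  qed
  have disj: "\<forall>i\<in>Ed. \<forall>j\<in>Ed. i \<noteq> j \<longrightarrow> F i \<inter> F j = {}"
  proof (intro ballI impI)
    fix i j assume ij: "i \<in> Ed" "j \<in> Ed" "i \<noteq> j"
    show "F i \<inter> F j = {}"
    proof (rule ccontr)
      assume "F i \<inter> F j \<noteq> {}"
      then obtain x y where xy: "(x,y) \<in> F i" "(x,y) \<in> F j" by auto
      obtain a b where ab: "i = {a,b}" using ij(1) unfolding Ed_def by auto
      obtain c d where cd: "j = {c,d}" using ij(2) unfolding Ed_def by auto
      have "i = {x,y}" using xy(1) ab unfolding F_def by auto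
      moreover have "j = {x,y}" using xy(2) cd unfolding F_def by auto
      ultimately show False using ij(3) by simp
    qed
  qed
  have "card P = (\<Sum>e\<in>Ed. card (F e))"
    unfolding PU using card_UN_disjoint[OF finEd finF disj] .
  also have "\<dots> = (\<Sum>e\<in>Ed. 2)" using c2 by simp
  also have "\<dots> = 2 * card Ed" by simp
  finally show ?thesis using s1 unfolding num_edges_def Ed_def by simp
qed

lemma sum_distinct_pos:
  fixes A :: "nat set"
  assumes "finite A" "0 \<notin> A"
  shows "card A * (card A + 1) \<le> 2 * \<Sum>A"
  using assms
proof (induction "card A" arbitrary: A)
  case 0
  then show ?case by simp
next
  case (Suc k)
  then have ne: "A \<noteq> {}" by auto
  define M where "M = Max A"
  have MA: "M \<in> A" using Suc.prems ne Max_in M_def by auto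
  have sub: "A \<subseteq> {1..M}"
  proof
    fix x assume "x \<in> A"
    then have "x \<noteq> 0" using Suc.prems(2) by metis
    moreover have "x \<le> M" using \<open>x \<in> A\<close> Suc.prems M_def by auto
    ultimately show "x \<in> {1..M}" by simp
  qed
  have "card A \<le> M" using card_mono[OF _ sub] by simp
  have ck: "card (A - {M}) = k" using Suc.hyps(2) MA Suc.prems by simp
  have IH: "k * (k+1) \<le> 2 * \<Sum>(A - {M})" using Suc.hyps(1)[of "A - {M}"] ck Suc.prems by auto
  have "\<Sum>A = M + \<Sum>(A - {M})" using Suc.prems(1) MA by (simp add: sum.remove)
  moreover have "card A * (card A + 1) = k*(k+1) + 2*card A"
    unfolding Suc.hyps(2)[symmetric] by (simp add: algebra_simps)
  ultimately show ?case using IH \<open>card A \<le> M\<close> by linarith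
qed

lemma sum_top:
  fixes D :: "nat set"
  assumes "D \<subseteq> {1..M}"
  shows "2 * \<Sum>D + (M - card D) * (M - card D + 1) \<le> M * (M + 1)"
proof -
  have fD: "finite D" using assms finite_subset by blast
  define C where "C = {1..M} - D"
  have cC: "card C = M - card D" unfolding C_def using assms fD by (simp add: card_Diff_subset)
  have "card C * (card C + 1) \<le> 2 * \<Sum>C" by (rule sum_distinct_pos) (auto simp: C_def)
  moreover have "\<Sum>D + \<Sum>C = \<Sum>{1..M}" unfolding C_def using assms
    using sum.subset_diff[of D "{1..M}" "\<lambda>x. x"] by simp
  moreover have "2 * \<Sum>{1..M} = M * (M+1)"
  proof -
    have "\<Sum>{1..M} = \<Sum>{0..M}" by (simp add: sum.atLeast_Suc_atMost atLeast0AtMost Icc_eq_insert_lb_nat sum_shift_lb_Suc0_0)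
    then show ?thesis by (simp add: gauss_sum_nat)
  qed
  ultimately show ?thesis unfolding cC[symmetric] by linarith
qed

lemma arith_final:
  fixes D n r m b w j t SR SX SW :: int
  assumes a1: "4*n^2 - 4 \<le> 2*(D + SR + SX + SW)"
  and a2: "2*SX + t*(t+1) \<le> (D-1)*D"
  and a3: "SR \<le> r*m" and a4: "0 \<le> m" "m \<le> b" "m \<le> 2*n+1-D"
  and a5: "SW \<le> (w-j)*b" "0 \<le> j" "j \<le> w"
  and a6: "r = t + 1 + j" "0 \<le> t"
  and a7: "w = 2*n-1-D" "b + 2 \<le> D" "0 \<le> b" "n + 3 \<le> D" "6 \<le> n"
  shows False
proof -
  have h1: "0 \<le> (m-t)*(m-t-1)"
  proof (cases "m - t \<ge> 1")
    case True then show ?thesis by simp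
  next
    case False then have "m - t \<le> 0" by simp
    then show ?thesis by (simp add: mult_nonpos_nonpos)
  qed
  have h2: "j*m \<le> j*b" using a4 a5 by (simp add: mult_left_mono)
  have h3: "m*(m+1) \<le> (2*n+1-D)*(2*n+1-D+1)" using a4 by (intro mult_mono) auto
  have h4: "w*b \<le> w*(D-2)" using a5 a7 by (intro mult_left_mono) auto
  have e1: "2*(r*m) - t*(t+1) = 2*(t+1)*m + 2*(j*m) - t*(t+1)" using a6 by (simp add: algebra_simps)
  have e2: "(w-j)*b = w*b - j*b" by (simp add: algebra_simps)
  have "2*(D + SR + SX + SW) \<le> 2*D + 2*(r*m) + (D-1)*D - t*(t+1) + 2*((w-j)*b)"
    using a2 a3 a5(1) by (smt (verit))
  also have "\<dots> \<le> 2*D + m*(m+1) + (D-1)*D + 2*(w*b)"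
    using e1 e2 h1 h2 by (simp add: algebra_simps)
  also have "\<dots> \<le> 2*D + (2*n+1-D)*(2*n+1-D+1) + (D-1)*D + 2*(w*(D-2))"
    using h3 h4 by linarith
  also have "\<dots> = 4*n^2 - 2*n + 6" unfolding a7(1) by (simp add: algebra_simps power2_eq_square)
  finally show False using a1 a7 by linarith
qed

lemma aux_lin: "(a::int) \<le> e + 1 \<Longrightarrow> s = x1 + x2 + x3 + x4 \<Longrightarrow> s = 2 * e \<Longrightarrow> 4 * a - 4 \<le> 2 * (x1 + x2 + x3 + x4)"
  by presburger

theorem lemma3p3:
  fixes V :: "'a set" and E :: "'a \<Rightarrow> 'a \<Rightarrow> bool" and n :: nat
  assumes "simple_graph V E"
    and "n \<ge> 6"
    and "card V = 2 * n"
    and "num_edges V E \<ge> n ^ 2 - 1"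
    and "\<forall>a\<in>V. \<forall>b\<in>V. a \<noteq> b \<and> degree V E a = degree V E b \<longrightarrow> \<not> path3 E a b"
  shows "beta V E \<ge> max_degree V E - 1 \<or> max_degree V E \<le> n + 2"
proof (rule ccontr)
  assume neg: "\<not> (beta V E \<ge> max_degree V E - 1 \<or> max_degree V E \<le> n + 2)"
  define deg where "deg = degree V E"
  define Dl where "Dl = max_degree V E"
  define bt where "bt = beta V E"
  have lt: "bt + 2 \<le> Dl" and big: "n + 3 \<le> Dl" using neg unfolding Dl_def bt_def by auto
  have fin: "finite V" using assms(1) by (simp add: simple_graph_def)
  have sym: "\<And>u v. E u v \<Longrightarrow> u \<in> V \<and> v \<in> V \<and> u \<noteq> v \<and> E v u"
    using assms(1) by (simp add: simple_graph_def)
  have Vne: "V \<noteq> {}" using assms(2,3) by auto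
  have deg_le: "deg x \<le> Dl" if "x \<in> V" for x
    unfolding Dl_def max_degree_def deg_def using fin that by simp
  obtain v where vV: "v \<in> V" and dv: "deg v = Dl"
  proof -
    have "Dl \<in> deg ` V" unfolding Dl_def max_degree_def deg_def using fin Vne by (intro Max_in) auto
    then show ?thesis using that by auto
  qed
  have pair_le: "deg x \<le> bt" if "x \<in> V" "y \<in> V" "x \<noteq> y" "deg x = deg y" for x y
  proof -
    let ?S = "{d. \<exists>u\<in>V. \<exists>v\<in>V. u \<noteq> v \<and> degree V E u = d \<and> degree V E v = d}"
    have "?S \<subseteq> degree V E ` V" by auto
    then have "finite ?S" using fin finite_subset by blast
    moreover have "\<exists>u\<in>V. \<exists>w\<in>V. u \<noteq> w \<and> degree V E u = deg x \<and> degree V E w = deg x"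
      using that unfolding deg_def by metis
    then have "deg x \<in> ?S" by simp
    ultimately show ?thesis unfolding bt_def beta_def by simp
  qed
  define Nv where "Nv = {y\<in>V. E v y}"
  have cNv: "card Nv = Dl" using dv unfolding deg_def degree_def Nv_def by simp
  have NvV: "Nv \<subseteq> V" unfolding Nv_def by auto
  have vNv: "v \<notin> Nv" unfolding Nv_def using sym by blast
  define R where "R = {a\<in>Nv. \<exists>b\<in>Nv. b \<noteq> a \<and> deg b = deg a}"
  define U where "U = Nv - R"
  define W where "W = V - Nv - {v}"
  define Wh where "Wh = {x\<in>W. bt < deg x}"
  define Wl where "Wl = W - Wh"
  define X where "X = U \<union> Wh"
  have finNv: "finite Nv" using NvV fin finite_subset by blast
  have RNv: "R \<subseteq> Nv" unfolding R_def by auto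
  have finR: "finite R" using RNv finNv finite_subset by blast
  have finU: "finite U" unfolding U_def using finNv by simp
  have finW: "finite W" unfolding W_def using fin by simp
  have finWh: "finite Wh" unfolding Wh_def using finW by simp
  have finWl: "finite Wl" unfolding Wl_def using finW by simp
  have cW: "card W + Dl + 1 = 2 * n"
  proof -
    have "W = V - insert v Nv" unfolding W_def by auto
    moreover have "card (insert v Nv) = Dl + 1" using cNv vNv finNv by simp
    moreover have "insert v Nv \<subseteq> V" using vV NvV by auto
    ultimately have "card W = card V - (Dl + 1)" and "Dl + 1 \<le> card V"
      using card_Diff_subset[of "insert v Nv" V] card_mono[OF fin, of "insert v Nv"] finNv by auto
    then show ?thesis using assms(3) by linarith
  qed
  define m where "m = min bt (2*n+1-Dl)"
  have Rdeg: "deg a \<le> m" if aR: "a \<in> R" for a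
  proof -
    obtain b where b: "b \<in> Nv" "b \<noteq> a" "deg b = deg a" and aN: "a \<in> Nv" using aR unfolding R_def by auto
    have aV: "a \<in> V" "b \<in> V" using aN b NvV by auto
    have le1: "deg a \<le> bt" using pair_le[of a b] aV b by auto
    have nop: "\<not> path3 E a b" using assms(5) aV b unfolding deg_def by auto
    have "{y\<in>V. E a y} \<subseteq> {v, b} \<union> W"
    proof
      fix y assume y: "y \<in> {y\<in>V. E a y}"
      show "y \<in> {v, b} \<union> W"
      proof (cases "y = v \<or> y = b")
        case True then show ?thesis by auto
      next
        case False
        have "y \<notin> Nv"
        proof
          assume yN: "y \<in> Nv"
          have "E a y" "E y v" "E v b" using y yN b sym unfolding Nv_def by auto
          moreover have "distinct [a, y, v, b]" using False b aN vNv sym \<open>E a y\<close> by auto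
          ultimately have "path3 E a b" unfolding path3_def by blast
          then show False using nop by simp
        qed
        then show ?thesis using y False unfolding W_def by auto
      qed
    qed
    then have "deg a \<le> card ({v, b} \<union> W)" unfolding deg_def degree_def
      using finW by (intro card_mono) auto
    also have "\<dots> \<le> card {v,b} + card W" by (rule card_Un_le)
    also have "\<dots> \<le> 2 + card W" by (simp add: card_insert_le_m1)
    finally have "deg a \<le> 2 * n + 1 - Dl" using cW by linarith
    then show ?thesis using le1 unfolding m_def by simp
  qed
  have SR: "(\<Sum>x\<in>R. deg x) \<le> card R * m"
    using sum_bounded_above[of R deg m] Rdeg by simp
  have SW: "(\<Sum>x\<in>Wl. deg x) \<le> card Wl * bt"
    using sum_bounded_above[of Wl deg bt] unfolding Wl_def Wh_def by fastforce
  have injX: "inj_on deg X"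
  proof
    fix x y assume xy: "x \<in> X" "y \<in> X" "deg x = deg y"
    show "x = y"
    proof (rule ccontr)
      assume ne: "x \<noteq> y"
      have "x \<in> V" "y \<in> V" using xy NvV unfolding X_def U_def Wh_def W_def by auto
      then have le: "deg x \<le> bt" using pair_le ne xy(3) by blast
      then have "x \<in> U" "y \<in> U" using xy unfolding X_def Wh_def by auto
      then show False using ne xy(3) unfolding U_def R_def by auto
    qed
  qed
  have Xrange: "deg ` X \<subseteq> {1..Dl-1}"
  proof
    fix d assume "d \<in> deg ` X"
    then obtain x where x: "x \<in> X" "d = deg x" by auto
    have xV: "x \<in> V" "x \<noteq> v" using x(1) NvV vNv unfolding X_def U_def Wh_def W_def by auto
    have "d \<noteq> 0"
    proof (cases "x \<in> U")
      case True
      then have "E x v" using sym unfolding U_def Nv_def by auto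
      then have "v \<in> {y\<in>V. E x y}" using vV by auto
      then have "{y\<in>V. E x y} \<noteq> {}" by auto
      then show ?thesis using x(2) fin unfolding deg_def degree_def by simp
    next
      case False then show ?thesis using x unfolding X_def Wh_def by auto
    qed
    moreover have "d \<noteq> Dl"
    proof
      assume "d = Dl"
      then have "deg x = deg v" using x dv by simp
      then have "deg x \<le> bt" using pair_le xV vV by blast
      then show False using \<open>d = Dl\<close> x lt by simp
    qed
    moreover have "d \<le> Dl" using deg_le xV x by simp
    ultimately show "d \<in> {1..Dl-1}" by auto
  qed
  have sumX: "(\<Sum>x\<in>X. deg x) = \<Sum>(deg ` X)" using sum.reindex[OF injX, of id] by simp
  have cX: "card (deg ` X) = card X" using card_image[OF injX] .
  have top: "2 * (\<Sum>x\<in>X. deg x) + (Dl - 1 - card X) * (Dl - 1 - card X + 1) \<le> (Dl - 1) * (Dl - 1 + 1)"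
    using sum_top[OF Xrange] unfolding sumX cX .
  have kle: "card X \<le> Dl - 1" using card_mono[OF _ Xrange] cX by simp
  have disjUWh: "U \<inter> Wh = {}" unfolding U_def Wh_def W_def by auto
  have cXs: "card X = card U + card Wh" unfolding X_def using card_Un_disjoint[OF finU finWh disjUWh] .
  have cU: "card U + card R = Dl" unfolding U_def using card_Diff_subset[OF finR RNv] card_mono[OF finNv RNv] cNv by simp
  have cWs: "card Wh + card Wl = card W" unfolding Wl_def
    using card_Diff_subset[OF finWh] card_mono[OF finW] finW unfolding Wh_def by fastforce
  have sumV: "(\<Sum>x\<in>V. deg x) = Dl + (\<Sum>x\<in>R. deg x) + (\<Sum>x\<in>X. deg x) + (\<Sum>x\<in>Wl. deg x)"
  proof -
    have V1: "V = insert v (Nv \<union> W)" unfolding W_def using vV NvV by auto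
    have Nv1: "Nv = R \<union> U" unfolding U_def using RNv by auto
    have W1: "W = Wh \<union> Wl" unfolding Wl_def Wh_def by auto
    have "(\<Sum>x\<in>V. deg x) = deg v + (\<Sum>x\<in>Nv \<union> W. deg x)"
      unfolding V1 using finNv finW vNv by (simp add: W_def)
    also have "(\<Sum>x\<in>Nv \<union> W. deg x) = (\<Sum>x\<in>Nv. deg x) + (\<Sum>x\<in>W. deg x)"
      using finNv finW by (intro sum.union_disjoint) (auto simp: W_def)
    also have "(\<Sum>x\<in>Nv. deg x) = (\<Sum>x\<in>R. deg x) + (\<Sum>x\<in>U. deg x)"
      unfolding Nv1 using finR finU by (intro sum.union_disjoint) (auto simp: U_def)
    also have "(\<Sum>x\<in>W. deg x) = (\<Sum>x\<in>Wh. deg x) + (\<Sum>x\<in>Wl. deg x)"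
      unfolding W1 using finWh finWl by (intro sum.union_disjoint) (auto simp: Wl_def)
    also have "(\<Sum>x\<in>X. deg x) = (\<Sum>x\<in>U. deg x) + (\<Sum>x\<in>Wh. deg x)"
      unfolding X_def using finU finWh disjUWh by (intro sum.union_disjoint) auto
    ultimately show ?thesis using dv by simp
  qed
  have hs: "(\<Sum>x\<in>V. deg x) = 2 * num_edges V E" unfolding deg_def using handshake[OF assms(1)] .
  have msm: "m \<le> bt" "m \<le> 2*n+1-Dl" unfolding m_def by auto
  have Dl1: "Dl \<ge> 1" using big by simp
  show False
  proof (rule arith_final[where n="int n" and D="int Dl" and SR="int (\<Sum>x\<in>R. deg x)" and SX="int (\<Sum>x\<in>X. deg x)"
      and SW="int (\<Sum>x\<in>Wl. deg x)" and t="int (Dl - 1 - card X)" and r="int (card R)" and m="int m"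
      and b="int bt" and j="int (card Wh)" and w="int (card W)"])
    show "4 * int n ^ 2 - 4 \<le> 2 * (int Dl + int (\<Sum>x\<in>R. deg x) + int (\<Sum>x\<in>X. deg x) + int (\<Sum>x\<in>Wl. deg x))"
    proof -
      have "n^2 \<ge> 1" using assms(2) by simp
      then have "num_edges V E + 1 \<ge> n^2" using assms(4) by linarith
      then have "int (num_edges V E + 1) \<ge> int (n^2)" by (simp only: of_nat_le_iff)
      then have "int (num_edges V E) + 1 \<ge> int n ^ 2" by simp
      moreover have "int (\<Sum>x\<in>V. deg x) = int Dl + int (\<Sum>x\<in>R. deg x) + int (\<Sum>x\<in>X. deg x) + int (\<Sum>x\<in>Wl. deg x)"
        using sumV by simp
      moreover have "int (\<Sum>x\<in>V. deg x) = 2 * int (num_edges V E)" using hs by simp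
      ultimately show ?thesis using aux_lin by metis
    qed
    show "2 * int (\<Sum>x\<in>X. deg x) + int (Dl - 1 - card X) * (int (Dl - 1 - card X) + 1) \<le> (int Dl - 1) * int Dl"
    proof -
      have "int (2 * (\<Sum>x\<in>X. deg x) + (Dl - 1 - card X) * (Dl - 1 - card X + 1)) \<le> int ((Dl - 1) * (Dl - 1 + 1))"
        using top by linarith
      then show ?thesis using Dl1 by (simp add: of_nat_diff distrib_left)
    qed
    show "int (\<Sum>x\<in>R. deg x) \<le> int (card R) * int m" using SR by (metis of_nat_le_iff of_nat_mult)
    show "0 \<le> int m" by simp
    show "int m \<le> int bt" using msm by simp
    show "int m \<le> 2 * int n + 1 - int Dl" using msm cW by linarith
    show "int (\<Sum>x\<in>Wl. deg x) \<le> (int (card W) - int (card Wh)) * int bt"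
    proof -
      have "int (card Wl) = int (card W) - int (card Wh)" using cWs by linarith
      then show ?thesis using SW by (metis of_nat_le_iff of_nat_mult)
    qed
    show "0 \<le> int (card Wh)" by simp
    show "int (card Wh) \<le> int (card W)" using cWs by linarith
    show "int (card R) = int (Dl - 1 - card X) + 1 + int (card Wh)"
    proof -
      have "card R = (Dl - 1 - card X) + 1 + card Wh" using kle cXs cU Dl1 by linarith
      then show ?thesis by simp
    qed
    show "0 \<le> int (Dl - 1 - card X)" by simp
    show "int (card W) = 2 * int n - 1 - int Dl" using cW by linarith
    show "int bt + 2 \<le> int Dl" using lt by linarith
    show "0 \<le> int bt" by simp
    show "int n + 3 \<le> int Dl" using big by linarith
    show "6 \<le> int n" using assms(2) by linarith
  qed
qed

end
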